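(* For every $n\ge 8$, $k^*(n)>\lfloor (n-8)/3\rfloor$. In other words, for every $n\ge 8$ there is a pair of trees, each with at most $n$ vertices, for which every minimum $\lfloor (n-8)/3\rfloor$-isometric-universal graph is not a tree.
   Context: Graphs are finite, simple and undirected. $\mathrm{dist}_G(u,v)$ denotes the number of edges of a shortest $u$–$v$ path in $G$ ($\infty$ if none exists). For an integer $k\ge 0$, a subgraph $H$ of $G$ is $k$-isometric if, for all vertices $u,v$ of $H$, $\mathrm{dist}_H(u,v)=\mathrm{dist}_G(u,v)$ whenever $\mathrm{dist}_G(u,v)\le k$. A graph $\mathcal U$ is a $k$-isometric-universal graph for a family $\mathcal F$ of graphs if every graph of $\mathcal F$ is isomorphic to a $k$-isometric subgraph of $\mathcal U$; it is minimum if it has the smallest possible number of vertices among all such graphs, and minimal if no proper subgraph of it is $k$-isometric-universal for $\mathcal F$. $k^*(n)$ denotes the smallest value such that for every $k\ge k^*(n)$, every minimum and minimal $k$-isometric-universal graph for a pair of trees each with at most $n$ vertices is a tree. *)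

theory Defs
  imports Main "HOL-Library.Extended_Nat"
begin

definition graph :: "'a set \<Rightarrow> 'a set set \<Rightarrow> bool" where
  "graph V E \<longleftrightarrow> finite V \<and> (\<forall>e\<in>E. \<exists>u v. u \<noteq> v \<and> u \<in> V \<and> v \<in> V \<and> e = {u, v})"

fun walk :: "'a set set \<Rightarrow> nat \<Rightarrow> 'a \<Rightarrow> 'a \<Rightarrow> bool" where
  "walk E 0 u v = (u = v)"
| "walk E (Suc n) u v = (\<exists>w. {u, w} \<in> E \<and> walk E n w v)"

definition gdist :: "'a set set \<Rightarrow> 'a \<Rightarrow> 'a \<Rightarrow> enat" where
  "gdist E u v = (if \<exists>n. walk E n u v then enat (LEAST n. walk E n u v) else \<infinity>)"

definition connected_graph :: "'a set \<Rightarrow> 'a set set \<Rightarrow> bool" where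
  "connected_graph V E \<longleftrightarrow> (\<forall>u\<in>V. \<forall>v\<in>V. \<exists>n. walk E n u v)"

definition has_cycle :: "'a set \<Rightarrow> 'a set set \<Rightarrow> bool" where
  "has_cycle V E \<longleftrightarrow> (\<exists>xs. length xs \<ge> 3 \<and> distinct xs \<and> set xs \<subseteq> V \<and>
       (\<forall>i < length xs. {xs ! i, xs ! ((i + 1) mod length xs)} \<in> E))"

definition is_tree :: "'a set \<Rightarrow> 'a set set \<Rightarrow> bool" where
  "is_tree V E \<longleftrightarrow> graph V E \<and> V \<noteq> {} \<and> connected_graph V E \<and> \<not> has_cycle V E"

definition subgraph :: "'a set \<Rightarrow> 'a set set \<Rightarrow> 'a set \<Rightarrow> 'a set set \<Rightarrow> bool" where
  "subgraph VH EH VG EG \<longleftrightarrow> graph VH EH \<and> VH \<subseteq> VG \<and> EH \<subseteq> EG"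

definition k_isometric :: "nat \<Rightarrow> 'a set \<Rightarrow> 'a set set \<Rightarrow> 'a set set \<Rightarrow> bool" where
  "k_isometric k VH EH EG \<longleftrightarrow>
     (\<forall>u\<in>VH. \<forall>v\<in>VH. gdist EG u v \<le> enat k \<longrightarrow> gdist EH u v = gdist EG u v)"

definition isomorphic ::
  "'a set \<Rightarrow> 'a set set \<Rightarrow> 'b set \<Rightarrow> 'b set set \<Rightarrow> bool" where
  "isomorphic V E V' E' \<longleftrightarrow> (\<exists>f. bij_betw f V V' \<and>
     (\<forall>u\<in>V. \<forall>v\<in>V. {u, v} \<in> E \<longleftrightarrow> {f u, f v} \<in> E'))"

definition k_iso_embeds ::
  "nat \<Rightarrow> 'a set \<Rightarrow> 'a set set \<Rightarrow> 'b set \<Rightarrow> 'b set set \<Rightarrow> bool" where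
  "k_iso_embeds k V E VU EU \<longleftrightarrow> (\<exists>VH EH. subgraph VH EH VU EU \<and>
     k_isometric k VH EH EU \<and> isomorphic V E VH EH)"

definition k_iso_universal ::
  "nat \<Rightarrow> ('a set \<times> 'a set set) set \<Rightarrow> 'b set \<Rightarrow> 'b set set \<Rightarrow> bool" where
  "k_iso_universal k F VU EU \<longleftrightarrow> graph VU EU \<and>
     (\<forall>(V, E)\<in>F. k_iso_embeds k V E VU EU)"

text \<open>Minimum: fewest vertices among all k-isometric-universal graphs (on the same
vertex type; for nat this covers all finite graphs up to isomorphism).\<close>
definition min_k_iso_universal ::
  "nat \<Rightarrow> ('a set \<times> 'a set set) set \<Rightarrow> 'b set \<Rightarrow> 'b set set \<Rightarrow> bool" where
  "min_k_iso_universal k F VU EU \<longleftrightarrow> k_iso_universal k F VU EU \<and>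
     (\<forall>VU' EU'. k_iso_universal k F VU' EU' \<longrightarrow> card VU \<le> card (VU' :: 'b set))"

end

theory Submission
  imports Defs
begin

lemma walk_trans: "walk E m a b \<Longrightarrow> walk E n b c \<Longrightarrow> walk E (m+n) a c"
  by (induction m arbitrary: a) auto

lemma walk_snoc: "walk E n a b \<Longrightarrow> {b,c} \<in> E \<Longrightarrow> walk E (Suc n) a c"
  using walk_trans[of E n a b 1 c] by auto

lemma walk_sym: "walk E n a b \<Longrightarrow> walk E n b a"
proof (induction n arbitrary: a)
  case (Suc n)
  then obtain w where w: "{a,w} \<in> E" "walk E n w b" by auto
  then have "walk E n b w" using Suc.IH by auto
  then show ?case using walk_snoc[of E n b w a] w by (simp add: insert_commute)
qed simp

lemma walk_mono: "walk E n a b \<Longrightarrow> E \<subseteq> E' \<Longrightarrow> walk E' n a b"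
  by (induction n arbitrary: a) auto

lemma walk_lip:
  assumes "walk E n a b" "\<forall>x y. {x,y} \<in> E \<longrightarrow> \<phi> x \<le> \<phi> y + 1"
  shows "\<phi> b \<le> \<phi> a + int n"
  using assms
proof (induction n arbitrary: a)
  case (Suc n)
  then obtain w where w: "{a,w} \<in> E" "walk E n w b" by auto
  have "\<phi> w \<le> \<phi> a + 1" using Suc.prems(2) w(1) by (metis insert_commute)
  with Suc.IH[OF w(2) Suc.prems(2)] show ?case by simp
qed simp

lemma gdist_le_walk: "walk E n u v \<Longrightarrow> gdist E u v \<le> enat n"
  unfolding gdist_def by (auto intro: Least_le)

lemma gdist_mono: "E \<subseteq> E' \<Longrightarrow> gdist E' u v \<le> gdist E u v"
proof -
  assume s: "E \<subseteq> E'"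
  show ?thesis
  proof (cases "\<exists>n. walk E n u v")
    case True
    then have "walk E (LEAST n. walk E n u v) u v" by (rule LeastI_ex)
    then have "gdist E' u v \<le> enat (LEAST n. walk E n u v)"
      using s by (intro gdist_le_walk) (rule walk_mono)
    then show ?thesis using True unfolding gdist_def[of E] by simp
  next
    case False then show ?thesis unfolding gdist_def[of E] by simp
  qed
qed

lemma kiso_by_lip:
  fixes k :: nat
  assumes sub: "EH \<subseteq> EU"
  and H: "\<And>u. u \<in> VH \<Longrightarrow> \<exists>\<phi>::'a\<Rightarrow>int. \<phi> u = 0 \<and> (\<forall>a b. {a,b} \<in> EU \<longrightarrow> \<phi> a \<le> \<phi> b + 1)
      \<and> (\<forall>v\<in>VH. \<phi> v \<ge> int k + 1 \<or> (\<exists>m. walk EH m u v \<and> int m \<le> \<phi> v))"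
  shows "k_isometric k VH EH EU"
  unfolding k_isometric_def
proof (intro ballI impI)
  fix u v assume u: "u \<in> VH" and v: "v \<in> VH" and d: "gdist EU u v \<le> enat k"
  have ex: "\<exists>n. walk EU n u v"
  proof (rule ccontr)
    assume "\<not> ?thesis" then have "gdist EU u v = \<infinity>" unfolding gdist_def by simp
    with d show False by simp
  qed
  define m where "m = (LEAST n. walk EU n u v)"
  have wm: "walk EU m u v" unfolding m_def using ex by (rule LeastI_ex)
  have gm: "gdist EU u v = enat m" unfolding gdist_def m_def using ex by simp
  with d have mk: "m \<le> k" by simp
  obtain \<phi> :: "'a \<Rightarrow> int" where p0: "\<phi> u = 0" and pl: "\<forall>a b. {a,b} \<in> EU \<longrightarrow> \<phi> a \<le> \<phi> b + 1"
    and pw: "\<forall>v\<in>VH. \<phi> v \<ge> int k + 1 \<or> (\<exists>m. walk EH m u v \<and> int m \<le> \<phi> v)"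
    using H[OF u] by blast
  have "\<phi> v \<le> int m" using walk_lip[OF wm pl] p0 by simp
  with mk have "\<not> \<phi> v \<ge> int k + 1" by simp
  with pw v obtain m' where w': "walk EH m' u v" and m': "int m' \<le> \<phi> v" by blast
  have "gdist EH u v \<le> enat m'" by (rule gdist_le_walk[OF w'])
  also have "\<dots> \<le> enat m" using m' \<open>\<phi> v \<le> int m\<close> by simp
  finally have "gdist EH u v \<le> gdist EU u v" using gm by simp
  moreover have "gdist EU u v \<le> gdist EH u v" using sub by (rule gdist_mono)
  ultimately show "gdist EH u v = gdist EU u v" by (rule antisym)
qed

fun pth :: "'a set set \<Rightarrow> 'a list \<Rightarrow> bool" where
  "pth E [] = True"
| "pth E [x] = True"
| "pth E (x # y # zs) = ({x,y} \<in> E \<and> pth E (y # zs))"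

lemma pth_Cons: "pth E (x # xs) \<longleftrightarrow> pth E xs \<and> (xs \<noteq> [] \<longrightarrow> {x, hd xs} \<in> E)"
  by (cases xs) auto

lemma pth_append: "pth E (xs @ ys) \<longleftrightarrow> pth E xs \<and> pth E ys \<and> (xs \<noteq> [] \<and> ys \<noteq> [] \<longrightarrow> {last xs, hd ys} \<in> E)"
  by (induction xs) (auto simp: pth_Cons)

lemma pth_rev: "pth E (rev xs) = pth E xs"
  by (induction xs) (auto simp: pth_append pth_Cons hd_rev last_rev insert_commute)

lemma pth_map: "\<forall>u\<in>V. \<forall>v\<in>V. {u,v} \<in> E \<longrightarrow> {f u, f v} \<in> E' \<Longrightarrow> set xs \<subseteq> V \<Longrightarrow> pth E xs \<Longrightarrow> pth E' (map f xs)"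
  apply (induction xs) apply (auto simp: pth_Cons hd_map)
  by (meson hd_in_set subsetD)

lemma pth_mono: "pth E xs \<Longrightarrow> E \<subseteq> E' \<Longrightarrow> pth E' xs"
  by (induction xs) (auto simp: pth_Cons)

lemma pth_nth: "pth E xs \<Longrightarrow> Suc i < length xs \<Longrightarrow> {xs ! i, xs ! Suc i} \<in> E"
proof (induction xs arbitrary: i)
  case (Cons x xs)
  show ?case
  proof (cases i)
    case 0 then show ?thesis using Cons by (cases xs) auto
  next
    case (Suc j) then show ?thesis using Cons by (auto simp: pth_Cons)
  qed
qed simp

lemma pth_upt: "(\<And>i. a \<le> i \<Longrightarrow> Suc i < b \<Longrightarrow> {i, Suc i} \<in> E) \<Longrightarrow> pth E [a..<b]"
proof (induction "b - a" arbitrary: a)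
  case 0 then show ?case by simp
next
  case (Suc d)
  then have ab: "a < b" by simp
  then have eq: "[a..<b] = a # [Suc a..<b]" by (simp add: upt_rec)
  have "pth E [Suc a..<b]" using Suc by auto
  moreover have "Suc a < b \<Longrightarrow> {a, Suc a} \<in> E" using Suc.prems by auto
  ultimately show ?case unfolding eq by (auto simp: pth_Cons)
qed

lemma cycle_from_pth:
  assumes "distinct xs" "length xs \<ge> 3" "set xs \<subseteq> V" "pth E xs" "{last xs, hd xs} \<in> E"
  shows "has_cycle V E"
  unfolding has_cycle_def
proof (intro exI conjI allI impI)
  fix i assume i: "i < length xs"
  show "{xs ! i, xs ! ((i + 1) mod length xs)} \<in> E"
  proof (cases "Suc i < length xs")
    case True then show ?thesis using pth_nth[OF assms(4) True] by simp
  next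
    case False
    then have "i = length xs - 1" using i by simp
    moreover have "xs \<noteq> []" using assms(2) by auto
    ultimately have "xs ! i = last xs" "(i+1) mod length xs = 0"
      using last_conv_nth[of xs] by auto
    then show ?thesis using assms(5) \<open>xs \<noteq> []\<close> by (simp add: hd_conv_nth)
  qed
qed (use assms in auto)

lemma pth_unique:
  assumes nc: "\<not> has_cycle V E"
  shows "pth E xs \<Longrightarrow> pth E ys \<Longrightarrow> distinct xs \<Longrightarrow> distinct ys \<Longrightarrow> set xs \<subseteq> V \<Longrightarrow> set ys \<subseteq> V
    \<Longrightarrow> xs \<noteq> [] \<Longrightarrow> ys \<noteq> [] \<Longrightarrow> hd xs = hd ys \<Longrightarrow> last xs = last ys \<Longrightarrow> xs = ys"
proof (induction xs arbitrary: ys)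
  case Nil then show ?case by simp
next
  case (Cons u xs')
  obtain ys' where ys: "ys = u # ys'" using Cons.prems by (cases ys) auto
  show ?case
  proof (cases "xs' = []")
    case True
    then have "last ys = u" using Cons.prems by simp
    then show ?thesis using Cons.prems True ys
      by (cases "ys' = []") (auto simp: last_in_set)
  next
    case xne: False
    show ?thesis
    proof (cases "ys' = []")
      case True
      then have "last (u # xs') = u" using Cons.prems ys by simp
      then show ?thesis using Cons.prems xne ys True by (auto simp: last_in_set)
    next
      case yne: False
      show ?thesis
      proof (cases "hd xs' = hd ys'")
        case True
        have "xs' = ys'"
          using Cons.IH[of ys'] Cons.prems True xne yne ys by (auto simp: pth_Cons)
        then show ?thesis using ys by simp
      next
        case hne: False
        have "last xs' \<in> set ys'" using Cons.prems xne yne ys by (simp add: last_in_set)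
        then have "\<exists>x\<in>set xs'. x \<in> set ys'" using xne by (auto simp: last_in_set)
        then obtain p w q where xs': "xs' = p @ w # q" and w: "w \<in> set ys'" and p: "\<forall>y\<in>set p. y \<notin> set ys'"
          using split_list_first_prop[of xs' "\<lambda>x. x \<in> set ys'"] by blast
        obtain r s where ys': "ys' = r @ w # s" using w split_list by metis
        define cl where "cl = (u # p @ [w]) @ rev r"
        have pu: "pth E (u # p @ [w])"
          using Cons.prems(1) unfolding xs' by (simp add: pth_append[of E "u#p@[w]" q, simplified] pth_append)
        have pr: "pth E (r @ [w])"
          using Cons.prems(2) unfolding ys ys' by (auto simp: pth_append pth_Cons)
        have pcl: "pth E cl"
          unfolding cl_def using pu pr
          by (auto simp: pth_append pth_rev pth_Cons hd_rev hd_append insert_commute split: if_splits)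
        have dcl: "distinct cl"
          unfolding cl_def using Cons.prems(3,4) p unfolding ys ys' xs' by auto
        have lcl: "length cl \<ge> 3"
        proof (rule ccontr)
          assume "\<not> ?thesis"
          then have "p = [] \<and> r = []" unfolding cl_def by (cases p; cases r) auto
          then show False using hne xs' ys' by simp
        qed
        have scl: "set cl \<subseteq> V"
          unfolding cl_def using Cons.prems(5,6) unfolding ys ys' xs' by auto
        have e1: "{u, hd ys'} \<in> E" using Cons.prems(2) yne unfolding ys by (auto simp: pth_Cons)
        have "{last cl, hd cl} \<in> E"
        proof (cases "r = []")
          case True
          then have "hd ys' = w" using ys' by simp
          then show ?thesis using e1 True unfolding cl_def by (simp add: insert_commute)
        next
          case False
          then have "last cl = hd r" unfolding cl_def by (simp add: last_rev)
          moreover have "hd ys' = hd r" using False ys' by simp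
          ultimately show ?thesis using e1 unfolding cl_def by (simp add: insert_commute)
        qed
        then have "has_cycle V E" using cycle_from_pth[OF dcl lcl scl pcl] by simp
        with nc show ?thesis by simp
      qed
    qed
  qed
qed

lemma walk_pth:
  "walk E n u v \<Longrightarrow> \<exists>xs. pth E xs \<and> distinct xs \<and> xs \<noteq> [] \<and> hd xs = u \<and> last xs = v \<and> set xs \<subseteq> insert u (\<Union>E)"
proof (induction n arbitrary: u)
  case 0 then show ?case by (intro exI[of _ "[u]"]) auto
next
  case (Suc n)
  then obtain w where w: "{u,w} \<in> E" "walk E n w v" by auto
  then obtain ys where ys: "pth E ys" "distinct ys" "ys \<noteq> []" "hd ys = w" "last ys = v" "set ys \<subseteq> insert w (\<Union>E)"
    using Suc.IH by blast
  have wE: "w \<in> \<Union>E" "u \<in> \<Union>E" using w(1) by auto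
  show ?case
  proof (cases "u \<in> set ys")
    case True
    then obtain a b where ab: "ys = a @ u # b" by (metis split_list)
    show ?thesis
      using ys wE unfolding ab
      by (intro exI[of _ "u # b"]) (auto simp: pth_append)
  next
    case False
    show ?thesis
      using ys wE w(1) False
      by (intro exI[of _ "u # ys"]) (auto simp: pth_Cons)
  qed
qed

lemma tree_par:
  fixes dep :: "'a \<Rightarrow> nat"
  assumes fin: "finite V" and r: "r \<in> V"
  and par: "\<And>v. v \<in> V \<Longrightarrow> v \<noteq> r \<Longrightarrow> par v \<in> V \<and> par v \<noteq> v \<and> dep (par v) < dep v"
  shows "is_tree V ((\<lambda>v. {v, par v}) ` (V - {r}))"
proof -
  define E where "E = (\<lambda>v. {v, par v}) ` (V - {r})"
  have g: "graph V E" unfolding graph_def E_def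
  proof (intro conjI ballI)
    fix e assume "e \<in> (\<lambda>v. {v, par v}) ` (V - {r})"
    then obtain v where "v \<in> V" "v \<noteq> r" "e = {v, par v}" by auto
    then show "\<exists>u v. u \<noteq> v \<and> u \<in> V \<and> v \<in> V \<and> e = {u, v}" using par[of v] by metis
  qed (rule fin)
  have tor: "v \<in> V \<Longrightarrow> \<exists>n. walk E n v r" for v
  proof (induction "dep v" arbitrary: v rule: less_induct)
    case less
    show ?case
    proof (cases "v = r")
      case True then show ?thesis by (intro exI[of _ 0]) simp
    next
      case False
      then have p: "par v \<in> V" "dep (par v) < dep v" using par less.prems by auto
      then obtain n where "walk E n (par v) r" using less.hyps by blast
      moreover have "{v, par v} \<in> E" unfolding E_def using less.prems False by auto
      ultimately have "walk E (Suc n) v r" by auto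
      then show ?thesis by blast
    qed
  qed
  have c: "connected_graph V E" unfolding connected_graph_def
  proof (intro ballI)
    fix u v assume "u \<in> V" "v \<in> V"
    then obtain m n where "walk E m u r" "walk E n v r" using tor by blast
    then have "walk E (m+n) u v" using walk_trans[of E m u r n v] walk_sym[of E n v r] by simp
    then show "\<exists>n. walk E n u v" by blast
  qed
  have edge: "{a,b} \<in> E \<Longrightarrow> (a \<noteq> r \<and> a \<in> V \<and> par a = b) \<or> (b \<noteq> r \<and> b \<in> V \<and> par b = a)" for a b
    unfolding E_def by (auto simp: doubleton_eq_iff)
  have nc: "\<not> has_cycle V E"
  proof
    assume "has_cycle V E"
    then obtain xs where L: "length xs \<ge> 3" and d: "distinct xs" and s: "set xs \<subseteq> V"
      and cyc: "\<forall>i < length xs. {xs ! i, xs ! ((i + 1) mod length xs)} \<in> E"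
      unfolding has_cycle_def by blast
    define L where "L = length xs"
    have ne: "set xs \<noteq> {}" using L by auto
    define m where "m = Max (dep ` set xs)"
    have "m \<in> dep ` set xs" unfolding m_def using ne by simp
    then obtain i where i: "i < L" and mi: "dep (xs ! i) = m" unfolding L_def by (auto simp: in_set_conv_nth)
    have mx: "j < L \<Longrightarrow> dep (xs ! j) \<le> m" for j unfolding m_def L_def by (intro Max_ge) auto
    define j1 where "j1 = (i + 1) mod L"
    define j0 where "j0 = (i + L - 1) mod L"
    have L3: "L \<ge> 3" using L unfolding L_def .
    have j1L: "j1 < L" unfolding j1_def using L3 by simp
    have j0L: "j0 < L" unfolding j0_def using L3 by simp
    have j0s: "(j0 + 1) mod L = i"
    proof -
      have "(j0 + 1) mod L = (i + L - 1 + 1) mod L" unfolding j0_def by (simp add: mod_Suc_eq)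
      also have "i + L - 1 + 1 = i + L" using L3 by simp
      finally show ?thesis using i by simp
    qed
    have j01: "j0 \<noteq> j1"
    proof (cases "i = 0")
      case True
      then have "j0 = (L - 1) mod L" unfolding j0_def by simp
      also have "\<dots> = L - 1" using L3 by (intro mod_less) simp
      finally have a: "j0 = L - 1" .
      have "j1 = 1" unfolding j1_def using True L3 by (simp add: mod_less)
      then show ?thesis using L3 a by simp
    next
      case False
      then have "i + L - 1 = (i - 1) + L" by simp
      then have "j0 = (i - 1 + L) mod L" unfolding j0_def by metis
      also have "\<dots> = (i - 1) mod L" by (rule mod_add_self2)
      also have "\<dots> = i - 1" using i by (intro mod_less) simp
      finally have a: "j0 = i - 1" .
      show ?thesis
      proof (cases "i + 1 = L")
        case True
        then have "j1 = 0" unfolding j1_def by simp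
        then show ?thesis using a False True L3 by simp
      next
        case F2: False
        then have "i + 1 < L" using i by simp
        then have "j1 = i + 1" unfolding j1_def by (intro mod_less)
        then show ?thesis using a by simp
      qed
    qed
    have e1: "{xs ! i, xs ! j1} \<in> E" using cyc i unfolding j1_def L_def by auto
    have e0: "{xs ! j0, xs ! i} \<in> E" using cyc[rule_format, of j0] j0L j0s unfolding L_def by simp
    have sub: "j < L \<Longrightarrow> xs ! j \<in> V" for j using s unfolding L_def by (meson nth_mem subsetD)
    have p1: "par (xs ! i) = xs ! j1"
    proof -
      have "\<not> (xs ! j1 \<noteq> r \<and> xs ! j1 \<in> V \<and> par (xs ! j1) = xs ! i)"
      proof
        assume h: "xs ! j1 \<noteq> r \<and> xs ! j1 \<in> V \<and> par (xs ! j1) = xs ! i"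
        then have "dep (xs ! i) < dep (xs ! j1)" using par[of "xs ! j1"] by auto
        then show False using mx[OF j1L] mi by simp
      qed
      then show ?thesis using edge[OF e1] by blast
    qed
    have p0: "par (xs ! i) = xs ! j0"
    proof -
      have "\<not> (xs ! j0 \<noteq> r \<and> xs ! j0 \<in> V \<and> par (xs ! j0) = xs ! i)"
      proof
        assume h: "xs ! j0 \<noteq> r \<and> xs ! j0 \<in> V \<and> par (xs ! j0) = xs ! i"
        then have "dep (xs ! i) < dep (xs ! j0)" using par[of "xs ! j0"] by auto
        then show False using mx[OF j0L] mi by simp
      qed
      then show ?thesis using edge[OF e0] by blast
    qed
    have "xs ! j0 \<noteq> xs ! j1" using d j0L j1L j01 unfolding L_def by (simp add: nth_eq_iff_index_eq)
    with p0 p1 show False by simp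
  qed
  show ?thesis unfolding is_tree_def E_def[symmetric] using g c nc r by auto
qed

definition V1 :: "nat \<Rightarrow> nat set" where "V1 k = {0..k+3} \<union> {2*k+4..<4*k+8}"
definition par1 :: "nat \<Rightarrow> nat \<Rightarrow> nat" where
  "par1 k v = (if v \<le> k+3 then v - 1 else if v < 3*k+6 then 0 else k+3)"
definition dep1 :: "nat \<Rightarrow> nat \<Rightarrow> nat" where
  "dep1 k v = (if v \<le> k+3 then v else if v < 3*k+6 then 1 else k+4)"
definition E1 :: "nat \<Rightarrow> nat set set" where "E1 k = (\<lambda>v. {v, par1 k v}) ` (V1 k - {0})"

definition V2 :: "nat \<Rightarrow> nat set" where "V2 k = {0,1} \<union> {k+2..<4*k+8}"
definition par2 :: "nat \<Rightarrow> nat \<Rightarrow> nat" where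
  "par2 k v = (if v = 1 then 0 else if v = k+2 then k+3 else if v = 2*k+3 then 0
     else if v < 2*k+3 then v+1 else if v < 3*k+6 then 0 else k+3)"
definition dep2 :: "nat \<Rightarrow> nat \<Rightarrow> nat" where
  "dep2 k v = (if v = 0 then 0 else if v = 1 then 1 else if v = k+2 then k+2
     else if v \<le> 2*k+3 then 2*k+4 - v else if v < 3*k+6 then 1 else k+2)"
definition E2 :: "nat \<Rightarrow> nat set set" where "E2 k = (\<lambda>v. {v, par2 k v}) ` (V2 k - {0})"

definition VU0 :: "nat \<Rightarrow> nat set" where "VU0 k = {0..<4*k+8}"
definition EU0 :: "nat \<Rightarrow> nat set set" where "EU0 k = E1 k \<union> E2 k"

lemma par1_ok: "v \<in> V1 k \<Longrightarrow> v \<noteq> 0 \<Longrightarrow> par1 k v \<in> V1 k \<and> par1 k v \<noteq> v \<and> dep1 k (par1 k v) < dep1 k v"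
proof -
  assume v: "v \<in> V1 k" "v \<noteq> 0"
  consider "v \<le> k+3" | "2*k+4 \<le> v" "v < 3*k+6" | "3*k+6 \<le> v" "v < 4*k+8"
    using v unfolding V1_def by force
  then show ?thesis
  proof cases
    case 1 then show ?thesis using v by (auto simp: V1_def par1_def dep1_def)
  next
    case 2 then show ?thesis by (simp add: V1_def par1_def dep1_def)
  next
    case 3 then show ?thesis by (simp add: V1_def par1_def dep1_def)
  qed
qed

lemma tree1: "is_tree (V1 k) (E1 k)"
  unfolding E1_def
  apply (rule tree_par[where dep = "dep1 k"])
  apply (simp add: V1_def) apply (simp add: V1_def)
  by (rule par1_ok)

lemma par2_ok: "v \<in> V2 k \<Longrightarrow> v \<noteq> 0 \<Longrightarrow> par2 k v \<in> V2 k \<and> par2 k v \<noteq> v \<and> dep2 k (par2 k v) < dep2 k v"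
proof -
  assume v: "v \<in> V2 k" "v \<noteq> 0"
  consider "v = 1" | "v = k+2" | "v = 2*k+3" | "k+3 \<le> v" "v < 2*k+3" | "2*k+4 \<le> v" "v < 3*k+6" | "3*k+6 \<le> v" "v < 4*k+8"
    using v unfolding V2_def by force
  then show ?thesis
  proof cases
    case 1 then show ?thesis by (simp add: V2_def par2_def dep2_def)
  next
    case 2 then show ?thesis by (simp add: V2_def par2_def dep2_def)
  next
    case 3 then show ?thesis by (simp add: V2_def par2_def dep2_def)
  next
    case 4 then show ?thesis by (simp add: V2_def par2_def dep2_def)
  next
    case 5 then show ?thesis by (simp add: V2_def par2_def dep2_def)
  next
    case 6 then show ?thesis by (simp add: V2_def par2_def dep2_def)
  qed
qed

lemma tree2: "is_tree (V2 k) (E2 k)"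
  unfolding E2_def
  apply (rule tree_par[where dep = "dep2 k"])
  apply (simp add: V2_def) apply (simp add: V2_def)
  by (rule par2_ok)

lemma card1: "card (V1 k) = 3*k+8"
proof -
  have "card (V1 k) = card {0..k+3} + card {2*k+4..<4*k+8}"
    unfolding V1_def by (rule card_Un_disjoint) auto
  then show ?thesis by simp
qed

lemma card2: "card (V2 k) = 3*k+8"
proof -
  have "card (V2 k) = card {0::nat,1} + card {k+2..<4*k+8}"
    unfolding V2_def by (rule card_Un_disjoint) auto
  then show ?thesis by simp
qed

lemma cardU0: "card (VU0 k) = 4*k+8" unfolding VU0_def by simp

lemma V1_sub: "V1 k \<subseteq> VU0 k" unfolding V1_def VU0_def by auto
lemma V2_sub: "V2 k \<subseteq> VU0 k" unfolding V2_def VU0_def by auto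

lemma graphU0: "graph (VU0 k) (EU0 k)"
proof -
  have g1: "graph (V1 k) (E1 k)" and g2: "graph (V2 k) (E2 k)" using tree1 tree2 unfolding is_tree_def by auto
  show ?thesis unfolding graph_def
  proof (intro conjI ballI)
    show "finite (VU0 k)" unfolding VU0_def by simp
  next
    fix e assume "e \<in> EU0 k"
    then consider "e \<in> E1 k" | "e \<in> E2 k" unfolding EU0_def by auto
    then show "\<exists>u v. u \<noteq> v \<and> u \<in> VU0 k \<and> v \<in> VU0 k \<and> e = {u, v}"
    proof cases
      case 1 then obtain u v where "u \<noteq> v" "u \<in> V1 k" "v \<in> V1 k" "e = {u,v}" using g1 unfolding graph_def by meson
      then show ?thesis using V1_sub by blast
    next
      case 2 then obtain u v where "u \<noteq> v" "u \<in> V2 k" "v \<in> V2 k" "e = {u,v}" using g2 unfolding graph_def by meson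
      then show ?thesis using V2_sub by blast
    qed
  qed
qed

lemma walk_arc:
  assumes arc: "\<And>t. t < L \<Longrightarrow> {\<sigma> t, \<sigma> (Suc t)} \<in> E"
  shows "i \<le> j \<Longrightarrow> j \<le> L \<Longrightarrow> walk E (j - i) (\<sigma> i) (\<sigma> j)"
proof (induction "j - i" arbitrary: i)
  case 0 then show ?case by simp
next
  case (Suc d)
  then have "walk E (j - Suc i) (\<sigma> (Suc i)) (\<sigma> j)" by simp
  moreover have "{\<sigma> i, \<sigma> (Suc i)} \<in> E" using arc Suc by simp
  ultimately have "walk E (Suc (j - Suc i)) (\<sigma> i) (\<sigma> j)" by auto
  moreover have "Suc (j - Suc i) = j - i" using Suc by simp
  ultimately show ?case by simp
qed

lemma broom_walk:
  fixes \<sigma> :: "nat \<Rightarrow> 'a" and pos :: "'a \<Rightarrow> nat" and e :: "'a \<Rightarrow> nat"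
  assumes arc: "\<And>t. t < L \<Longrightarrow> {\<sigma> t, \<sigma> (Suc t)} \<in> E"
  and vert: "\<And>u. u \<in> V \<Longrightarrow> pos u \<le> L \<and> ((e u = 0 \<and> \<sigma> (pos u) = u) \<or> (e u = 1 \<and> {u, \<sigma> (pos u)} \<in> E))"
  and u: "u \<in> V" and v: "v \<in> V"
  shows "walk E (e u + e v + (if pos u \<le> pos v then pos v - pos u else pos u - pos v)) u v"
proof -
  have w1: "walk E (e u) u (\<sigma> (pos u))" using vert[OF u] by auto
  have w3: "walk E (e v) (\<sigma> (pos v)) v"
  proof -
    have "walk E (e v) v (\<sigma> (pos v))" using vert[OF v] by auto
    then show ?thesis by (rule walk_sym)
  qed
  have w2: "walk E (if pos u \<le> pos v then pos v - pos u else pos u - pos v) (\<sigma> (pos u)) (\<sigma> (pos v))"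
  proof (cases "pos u \<le> pos v")
    case True then show ?thesis using walk_arc[of L \<sigma> E "pos u" "pos v", OF arc] vert[OF v] by simp
  next
    case False then show ?thesis using walk_arc[of L \<sigma> E "pos v" "pos u", OF arc] vert[OF u] walk_sym by simp
  qed
  have "walk E (e u + (if pos u \<le> pos v then pos v - pos u else pos u - pos v) + e v) u v"
    using walk_trans[OF walk_trans[OF w1 w2] w3] .
  then show ?thesis by (simp add: ac_simps)
qed

definition pos1 :: "nat \<Rightarrow> nat \<Rightarrow> nat" where
  "pos1 k z = (if z \<le> k+3 then z else if z < 3*k+6 then 0 else k+3)"
definition e1 :: "nat \<Rightarrow> nat \<Rightarrow> nat" where
  "e1 k z = (if z \<le> k+3 then 0 else 1)"
definition G1 :: "nat \<Rightarrow> nat \<Rightarrow> nat \<Rightarrow> int" where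
  "G1 k u z = (if u = z then 0 else int (e1 k u + e1 k z) + \<bar>int (pos1 k u) - int (pos1 k z)\<bar>)"
definition phi1 :: "nat \<Rightarrow> nat \<Rightarrow> nat \<Rightarrow> int" where
  "phi1 k u z = (if z \<le> k+3 \<or> 2*k+4 \<le> z then min (int k + 1) (G1 k u z)
     else min (int k + 1) (min (G1 k u (k+3) + int z - int (k+3)) (G1 k u 0 + int (2*k+4) - int z)))"

lemma min_lip: "\<bar>a - b\<bar> \<le> 1 \<Longrightarrow> \<bar>min (K::int) a - min K b\<bar> \<le> 1"
  by (simp add: min_def abs_if split: if_splits) linarith?

lemma G1_nonneg: "G1 k u z \<ge> 0" unfolding G1_def by simp

lemma G1_arc: "u \<in> V1 k \<Longrightarrow> z \<le> k+3 \<Longrightarrow> G1 k u z = int (e1 k u) + \<bar>int (pos1 k u) - int z\<bar>"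
  unfolding G1_def e1_def pos1_def V1_def by auto

lemma G1_step: "u \<in> V1 k \<Longrightarrow> i < k+3 \<Longrightarrow> \<bar>G1 k u i - G1 k u (Suc i)\<bar> \<le> 1"
  using G1_arc[of u k i] G1_arc[of u k "Suc i"] by simp

lemma G1_pend: "u \<in> V1 k \<Longrightarrow> 2*k+4 \<le> p \<Longrightarrow> \<bar>G1 k u p - G1 k u (pos1 k p)\<bar> \<le> 1"
proof -
  assume u: "u \<in> V1 k" and p: "2*k+4 \<le> p"
  have pp: "pos1 k p \<le> k+3" unfolding pos1_def by simp
  have a: "G1 k u (pos1 k p) = int (e1 k u) + \<bar>int (pos1 k u) - int (pos1 k p)\<bar>"
    using G1_arc[OF u pp] .
  show ?thesis
  proof (cases "u = p")
    case True
    then have "e1 k u = 1" using p unfolding e1_def by simp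
    then show ?thesis using a True unfolding G1_def by simp
  next
    case False
    have "e1 k p = 1" using p unfolding e1_def by simp
    then show ?thesis using a False unfolding G1_def by simp
  qed
qed

lemma par1_pos: "2*k+4 \<le> p \<Longrightarrow> par1 k p = pos1 k p"
  unfolding par1_def pos1_def by simp

lemma phi1_lip_edge:
  assumes u: "u \<in> V1 k" and v: "(v \<in> V1 k \<and> v \<noteq> 0 \<and> w = par1 k v) \<or> (v \<in> V2 k \<and> v \<noteq> 0 \<and> w = par2 k v)"
  shows "\<bar>phi1 k u v - phi1 k u w\<bar> \<le> 1"
proof -
  define K where "K = int k + 1"
  define A where "A = G1 k u (k+3)"
  define B where "B = G1 k u 0"
  have A0: "A \<ge> 0" and B0: "B \<ge> 0" unfolding A_def B_def by (simp_all add: G1_nonneg)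
  have bnd: "0 \<le> phi1 k u z \<and> phi1 k u z \<le> K" for z
    unfolding phi1_def K_def using G1_nonneg[of k u "k+3"] G1_nonneg[of k u 0] G1_nonneg[of k u z] by (auto simp: min_def)
  have arcc: "\<And>i. i < k+3 \<Longrightarrow> \<bar>phi1 k u i - phi1 k u (Suc i)\<bar> \<le> 1"
  proof -
    fix i assume i: "i < k+3"
    have "phi1 k u i = min (int k + 1) (G1 k u i)" "phi1 k u (Suc i) = min (int k + 1) (G1 k u (Suc i))"
      unfolding phi1_def using i by auto
    then show "\<bar>phi1 k u i - phi1 k u (Suc i)\<bar> \<le> 1" using min_lip[OF G1_step[OF u i]] by simp
  qed
  have pend: "\<And>p. 2*k+4 \<le> p \<Longrightarrow> \<bar>phi1 k u p - phi1 k u (pos1 k p)\<bar> \<le> 1"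
  proof -
    fix p assume p: "2*k+4 \<le> p"
    have pp: "pos1 k p \<le> k+3" unfolding pos1_def by simp
    have "phi1 k u p = min (int k + 1) (G1 k u p)" "phi1 k u (pos1 k p) = min (int k + 1) (G1 k u (pos1 k p))"
      unfolding phi1_def using p pp by auto
    then show "\<bar>phi1 k u p - phi1 k u (pos1 k p)\<bar> \<le> 1" using min_lip[OF G1_pend[OF u p]] by simp
  qed
  from v show ?thesis
  proof
    assume h: "v \<in> V1 k \<and> v \<noteq> 0 \<and> w = par1 k v"
    show ?thesis
    proof (cases "v \<le> k+3")
      case True
      then have "w = v - 1" using h unfolding par1_def by simp
      then show ?thesis using arcc[of "v - 1"] True h by (simp add: abs_minus_commute)
    next
      case False
      then have "2*k+4 \<le> v" using h unfolding V1_def by auto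
      then show ?thesis using pend[of v] h par1_pos by simp
    qed
  next
    assume h: "v \<in> V2 k \<and> v \<noteq> 0 \<and> w = par2 k v"
    consider "v = 1" | "v = k+2" | "v = 2*k+3" | "k+3 \<le> v" "v < 2*k+3" | "2*k+4 \<le> v"
      using h unfolding V2_def by force
    then show ?thesis
    proof cases
      case 1 then show ?thesis using arcc[of 0] h unfolding par2_def by (simp add: abs_minus_commute)
    next
      case 2 then show ?thesis using arcc[of "k+2"] h unfolding par2_def by (simp add: abs_minus_commute numeral_eq_Suc)
    next
      case 3
      then have w0: "w = 0" using h unfolding par2_def by simp
      show ?thesis
      proof (cases "k = 0")
        case True then show ?thesis using bnd[of v] bnd[of w] unfolding K_def by (simp add: abs_le_iff)
      next
        case False
        have "phi1 k u v = min K (min (A + int k) (B + 1))"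
          unfolding phi1_def K_def A_def B_def using 3 False by auto
        moreover have "phi1 k u w = min K B" unfolding phi1_def K_def B_def w0 by simp
        ultimately show ?thesis using A0 B0 unfolding K_def by (simp add: min_def abs_if)
      qed
    next
      case 4
      then have w1: "w = v + 1" using h unfolding par2_def by auto
      have k1: "k \<ge> 1" using 4 by simp
      show ?thesis
      proof (cases "v = k+3")
        case True
        have "phi1 k u v = min K A" unfolding phi1_def K_def A_def True by simp
        moreover have "phi1 k u w = min K (min (A + 1) (B + int k))"
          unfolding phi1_def K_def A_def B_def w1 True using k1 by auto
        ultimately show ?thesis using A0 B0 unfolding K_def by (simp add: min_def abs_if)
      next
        case False
        have "phi1 k u v = min K (min (A + int v - int (k+3)) (B + int (2*k+4) - int v))"
          unfolding phi1_def K_def A_def B_def using 4 False by auto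
        moreover have "phi1 k u w = min K (min (A + int v + 1 - int (k+3)) (B + int (2*k+4) - int v - 1))"
          unfolding phi1_def K_def A_def B_def w1 using 4 False by auto
        ultimately show ?thesis by (simp add: min_def abs_if)
      qed
    next
      case 5
      then have "w = par1 k v" using h unfolding par2_def par1_def by auto
      then show ?thesis using pend[of v] 5 par1_pos by simp
    qed
  qed
qed

lemma walk1:
  assumes u: "u \<in> V1 k" and v: "v \<in> V1 k"
  shows "walk (E1 k) (nat (G1 k u v)) u v"
proof (cases "u = v")
  case True then show ?thesis unfolding G1_def by simp
next
  case False
  have arc: "\<And>t. t < k+3 \<Longrightarrow> {id t, id (Suc t)} \<in> E1 k"
  proof -
    fix t assume t: "t < k+3"
    have "{Suc t, par1 k (Suc t)} \<in> E1 k" unfolding E1_def using t by (auto simp: V1_def)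
    then show "{id t, id (Suc t)} \<in> E1 k" unfolding par1_def using t by (simp add: insert_commute)
  qed
  have vert: "\<And>w. w \<in> V1 k \<Longrightarrow> pos1 k w \<le> k+3 \<and> ((e1 k w = 0 \<and> id (pos1 k w) = w) \<or> (e1 k w = 1 \<and> {w, id (pos1 k w)} \<in> E1 k))"
  proof -
    fix w assume w: "w \<in> V1 k"
    show "pos1 k w \<le> k+3 \<and> ((e1 k w = 0 \<and> id (pos1 k w) = w) \<or> (e1 k w = 1 \<and> {w, id (pos1 k w)} \<in> E1 k))"
    proof (cases "w \<le> k+3")
      case True then show ?thesis unfolding pos1_def e1_def by simp
    next
      case False
      then have w2: "2*k+4 \<le> w" using w unfolding V1_def by auto
      have "{w, par1 k w} \<in> E1 k" unfolding E1_def using w w2 by auto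
      then show ?thesis using False w2 par1_pos[OF w2] unfolding pos1_def e1_def by auto
    qed
  qed
  have "walk (E1 k) (e1 k u + e1 k v + (if pos1 k u \<le> pos1 k v then pos1 k v - pos1 k u else pos1 k u - pos1 k v)) u v"
    by (rule broom_walk[OF arc vert u v])
  moreover have "nat (G1 k u v) = e1 k u + e1 k v + (if pos1 k u \<le> pos1 k v then pos1 k v - pos1 k u else pos1 k u - pos1 k v)"
    unfolding G1_def using False by auto
  ultimately show ?thesis by simp
qed

lemma EU0_edge: "{a,b} \<in> EU0 k \<Longrightarrow> \<exists>v w. ((v \<in> V1 k \<and> v \<noteq> 0 \<and> w = par1 k v) \<or> (v \<in> V2 k \<and> v \<noteq> 0 \<and> w = par2 k v))
   \<and> ((a = v \<and> b = w) \<or> (a = w \<and> b = v))"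
proof -
  assume "{a,b} \<in> EU0 k"
  then consider v where "v \<in> V1 k" "v \<noteq> 0" "{a,b} = {v, par1 k v}" | v where "v \<in> V2 k" "v \<noteq> 0" "{a,b} = {v, par2 k v}"
    unfolding EU0_def E1_def E2_def by blast
  then show ?thesis
  proof cases
    case 1 then show ?thesis unfolding doubleton_eq_iff by blast
  next
    case 2 then show ?thesis unfolding doubleton_eq_iff by blast
  qed
qed

lemma kiso1: "k_isometric k (V1 k) (E1 k) (EU0 k)"
proof (rule kiso_by_lip)
  show "E1 k \<subseteq> EU0 k" unfolding EU0_def by simp
next
  fix u assume u: "u \<in> V1 k"
  show "\<exists>\<phi>::nat\<Rightarrow>int. \<phi> u = 0 \<and> (\<forall>a b. {a,b} \<in> EU0 k \<longrightarrow> \<phi> a \<le> \<phi> b + 1)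
      \<and> (\<forall>v\<in>V1 k. \<phi> v \<ge> int k + 1 \<or> (\<exists>m. walk (E1 k) m u v \<and> int m \<le> \<phi> v))"
  proof (intro exI[of _ "phi1 k u"] conjI allI impI ballI)
    have "u \<le> k+3 \<or> 2*k+4 \<le> u" using u unfolding V1_def by auto
    then show "phi1 k u u = 0" unfolding phi1_def G1_def by auto
  next
    fix a b assume "{a,b} \<in> EU0 k"
    then obtain v w where vw: "(v \<in> V1 k \<and> v \<noteq> 0 \<and> w = par1 k v) \<or> (v \<in> V2 k \<and> v \<noteq> 0 \<and> w = par2 k v)"
      and ab: "(a = v \<and> b = w) \<or> (a = w \<and> b = v)" using EU0_edge by blast
    have "\<bar>phi1 k u v - phi1 k u w\<bar> \<le> 1" by (rule phi1_lip_edge[OF u vw])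
    then show "phi1 k u a \<le> phi1 k u b + 1" using ab by auto
  next
    fix v assume v: "v \<in> V1 k"
    have pv: "phi1 k u v = min (int k + 1) (G1 k u v)"
      using v unfolding phi1_def V1_def by auto
    show "int k + 1 \<le> phi1 k u v \<or> (\<exists>m. walk (E1 k) m u v \<and> int m \<le> phi1 k u v)"
    proof (cases "G1 k u v \<ge> int k + 1")
      case True then show ?thesis using pv by simp
    next
      case False
      then have "phi1 k u v = G1 k u v" using pv by simp
      then show ?thesis using walk1[OF u v] G1_nonneg[of k u v] by (intro disjI2 exI[of _ "nat (G1 k u v)"]) simp
    qed
  qed
qed

definition sig2 :: "nat \<Rightarrow> nat \<Rightarrow> nat" where
  "sig2 k t = (if t = 0 then 1 else if t = 1 then 0 else 2*k+5 - t)"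
definition pos2 :: "nat \<Rightarrow> nat \<Rightarrow> nat" where
  "pos2 k z = (if z = 1 then 0 else if z = 0 then 1 else if z \<le> 2*k+3 then 2*k+5 - z else if z < 3*k+6 then 1 else k+2)"
definition e2 :: "nat \<Rightarrow> nat \<Rightarrow> nat" where
  "e2 k z = (if z \<le> 2*k+3 then 0 else 1)"
definition G2 :: "nat \<Rightarrow> nat \<Rightarrow> nat \<Rightarrow> int" where
  "G2 k u z = (if u = z then 0 else int (e2 k u + e2 k z) + \<bar>int (pos2 k u) - int (pos2 k z)\<bar>)"
definition phi2 :: "nat \<Rightarrow> nat \<Rightarrow> nat \<Rightarrow> int" where
  "phi2 k u z = (if z \<le> 1 \<or> k+2 \<le> z then min (int k + 1) (G2 k u z)
     else min (int k + 1) (min (G2 k u 1 + int z - 1) (G2 k u (k+2) + int (k+2) - int z)))"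

lemma G2_nonneg: "G2 k u z \<ge> 0" unfolding G2_def by simp

definition cyc2 :: "nat \<Rightarrow> nat \<Rightarrow> bool" where "cyc2 k z \<longleftrightarrow> z \<le> 1 \<or> (k+2 \<le> z \<and> z \<le> 2*k+3)"

lemma G2_arc: "u \<in> V2 k \<Longrightarrow> cyc2 k z \<Longrightarrow> G2 k u z = int (e2 k u) + \<bar>int (pos2 k u) - int (pos2 k z)\<bar>"
  unfolding G2_def e2_def pos2_def V2_def cyc2_def by auto

lemma sig2_cyc: "t \<le> k+3 \<Longrightarrow> cyc2 k (sig2 k t) \<and> pos2 k (sig2 k t) = t"
  unfolding sig2_def cyc2_def pos2_def by auto

lemma G2_step: "u \<in> V2 k \<Longrightarrow> t < k+3 \<Longrightarrow> \<bar>G2 k u (sig2 k t) - G2 k u (sig2 k (Suc t))\<bar> \<le> 1"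
  using G2_arc[of u k "sig2 k t"] G2_arc[of u k "sig2 k (Suc t)"] sig2_cyc[of t k] sig2_cyc[of "Suc t" k] by simp

lemma hub2: "2*k+4 \<le> p \<Longrightarrow> p < 4*k+8 \<Longrightarrow> sig2 k (pos2 k p) = par2 k p \<and> par2 k p = par1 k p \<and> pos2 k p \<le> k+3"
  unfolding sig2_def pos2_def par2_def par1_def by auto

lemma G2_pend: "u \<in> V2 k \<Longrightarrow> 2*k+4 \<le> p \<Longrightarrow> p < 4*k+8 \<Longrightarrow> \<bar>G2 k u p - G2 k u (sig2 k (pos2 k p))\<bar> \<le> 1"
proof -
  assume u: "u \<in> V2 k" and p: "2*k+4 \<le> p" "p < 4*k+8"
  have pp: "pos2 k p \<le> k+3" using hub2[OF p] by simp
  have a: "G2 k u (sig2 k (pos2 k p)) = int (e2 k u) + \<bar>int (pos2 k u) - int (pos2 k p)\<bar>"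
    using G2_arc[OF u] sig2_cyc[OF pp] by simp
  show ?thesis
  proof (cases "u = p")
    case True
    then have "e2 k u = 1" using p unfolding e2_def by simp
    then show ?thesis using a True unfolding G2_def by simp
  next
    case False
    have "e2 k p = 1" using p unfolding e2_def by simp
    then show ?thesis using a False unfolding G2_def by simp
  qed
qed

lemma phi2_lip_edge:
  assumes u: "u \<in> V2 k" and v: "(v \<in> V1 k \<and> v \<noteq> 0 \<and> w = par1 k v) \<or> (v \<in> V2 k \<and> v \<noteq> 0 \<and> w = par2 k v)"
  shows "\<bar>phi2 k u v - phi2 k u w\<bar> \<le> 1"
proof -
  define K where "K = int k + 1"
  define A where "A = G2 k u 1"
  define B where "B = G2 k u (k+2)"
  have A0: "A \<ge> 0" and B0: "B \<ge> 0" unfolding A_def B_def by (simp_all add: G2_nonneg)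
  have bnd: "0 \<le> phi2 k u z \<and> phi2 k u z \<le> K" for z
    unfolding phi2_def K_def using G2_nonneg[of k u 1] G2_nonneg[of k u "k+2"] G2_nonneg[of k u z] by (auto simp: min_def)
  have ph: "cyc2 k z \<Longrightarrow> phi2 k u z = min (int k + 1) (G2 k u z)" for z
    unfolding phi2_def cyc2_def by auto
  have arcc: "\<bar>phi2 k u (sig2 k t) - phi2 k u (sig2 k (Suc t))\<bar> \<le> 1" if t: "t < k+3" for t
  proof -
    have "cyc2 k (sig2 k t)" "cyc2 k (sig2 k (Suc t))" using sig2_cyc[of t k] sig2_cyc[of "Suc t" k] t by auto
    then show ?thesis using min_lip[OF G2_step[OF u t]] ph by simp
  qed
  have pend: "\<bar>phi2 k u p - phi2 k u (par2 k p)\<bar> \<le> 1" if p: "2*k+4 \<le> p" "p < 4*k+8" for p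
  proof -
    have pp: "pos2 k p \<le> k+3" using hub2[OF p] by simp
    have "phi2 k u p = min (int k + 1) (G2 k u p)" unfolding phi2_def using p by auto
    moreover have "phi2 k u (sig2 k (pos2 k p)) = min (int k + 1) (G2 k u (sig2 k (pos2 k p)))"
      using ph sig2_cyc[OF pp] by simp
    ultimately show ?thesis using min_lip[OF G2_pend[OF u p]] hub2[OF p] by simp
  qed
  have s0: "sig2 k 0 = 1" "sig2 k 1 = 0" "sig2 k 2 = 2*k+3" "sig2 k (k+2) = k+3" "sig2 k (k+3) = k+2"
    "sig2 k (Suc (k+2)) = k+2" "sig2 k (Suc 1) = 2*k+3" "sig2 k (Suc 0) = 0"
    unfolding sig2_def by auto
  have a0: "\<bar>phi2 k u 1 - phi2 k u 0\<bar> \<le> 1" using arcc[of 0] s0 by simp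
  have a1: "\<bar>phi2 k u 0 - phi2 k u (2*k+3)\<bar> \<le> 1" using arcc[of 1] s0 by simp
  have a2: "\<bar>phi2 k u (k+3) - phi2 k u (k+2)\<bar> \<le> 1" using arcc[of "k+2"] s0 by simp
  from v show ?thesis
  proof
    assume h: "v \<in> V1 k \<and> v \<noteq> 0 \<and> w = par1 k v"
    show ?thesis
    proof (cases "v \<le> k+3")
      case True
      then have w: "w = v - 1" using h unfolding par1_def by simp
      consider "v = 1" | "v = k+3" | "v = k+2" | "2 \<le> v" "v \<le> k+1"
        using True h by linarith
      then show ?thesis
      proof cases
        case 1 then show ?thesis using a0 w by simp
      next
        case 2 then show ?thesis using a2 w by simp
      next
        case 3
        show ?thesis
        proof (cases "k = 0")
          case True then show ?thesis using bnd[of v] bnd[of w] unfolding K_def by (simp add: abs_le_iff)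
        next
          case False
          have "phi2 k u v = min K B" unfolding phi2_def K_def B_def 3 by simp
          moreover have "phi2 k u w = min K (min (A + int k) (B + 1))"
            unfolding phi2_def K_def A_def B_def w 3 using False by auto
          ultimately show ?thesis using A0 B0 unfolding K_def by (simp add: min_def abs_if)
        qed
      next
        case 4
        show ?thesis
        proof (cases "v = 2")
          case True
          have "phi2 k u w = min K A" unfolding phi2_def K_def A_def w True by simp
          moreover have "phi2 k u v = min K (min (A + 1) (B + int k))"
            unfolding phi2_def K_def A_def B_def True using 4 True by auto
          ultimately show ?thesis using A0 B0 unfolding K_def by (simp add: min_def abs_if)
        next
          case False
          have "phi2 k u v = min K (min (A + int v - 1) (B + int (k+2) - int v))"
            unfolding phi2_def K_def A_def B_def using 4 by auto
          moreover have "phi2 k u w = min K (min (A + int v - 2) (B + int (k+2) - int v + 1))"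
            unfolding phi2_def K_def A_def B_def w using 4 False by auto
          ultimately show ?thesis by (simp add: min_def abs_if)
        qed
      qed
    next
      case False
      then have "2*k+4 \<le> v" "v < 4*k+8" using h unfolding V1_def by auto
      then show ?thesis using pend[of v] h hub2 by simp
    qed
  next
    assume h: "v \<in> V2 k \<and> v \<noteq> 0 \<and> w = par2 k v"
    consider "v = 1" | "v = k+2" | "v = 2*k+3" | "k+3 \<le> v" "v < 2*k+3" | "2*k+4 \<le> v" "v < 4*k+8"
      using h unfolding V2_def by force
    then show ?thesis
    proof cases
      case 1 then show ?thesis using a0 h unfolding par2_def by simp
    next
      case 2 then show ?thesis using a2 h unfolding par2_def by (simp add: abs_minus_commute)
    next
      case 3
      then have "w = 0" "v \<noteq> k+2" "v \<noteq> 1" using h unfolding par2_def by auto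
      then show ?thesis using a1 3 by (simp add: abs_minus_commute)
    next
      case 4
      then have w1: "w = v + 1" using h unfolding par2_def by auto
      define t where "t = 2*k+4 - v"
      have t: "t < k+3" "2 \<le> t" unfolding t_def using 4 by auto
      have "sig2 k t = v + 1" "sig2 k (Suc t) = v" unfolding sig2_def t_def using 4 by auto
      then show ?thesis using arcc[OF t(1)] w1 by (simp add: abs_minus_commute)
    next
      case 5
      then show ?thesis using pend[of v] h by simp
    qed
  qed
qed

lemma walk2:
  assumes u: "u \<in> V2 k" and v: "v \<in> V2 k"
  shows "walk (E2 k) (nat (G2 k u v)) u v"
proof (cases "u = v")
  case True then show ?thesis unfolding G2_def by simp
next
  case False
  have arc: "\<And>t. t < k+3 \<Longrightarrow> {sig2 k t, sig2 k (Suc t)} \<in> E2 k"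
  proof -
    fix t assume t: "t < k+3"
    consider "t = 0" | "t = 1" | "2 \<le> t" by linarith
    then show "{sig2 k t, sig2 k (Suc t)} \<in> E2 k"
    proof cases
      case 1
      have "{1, par2 k 1} \<in> E2 k" unfolding E2_def by (auto simp: V2_def)
      then show ?thesis using 1 unfolding sig2_def par2_def by simp
    next
      case 2
      have "{2*k+3, par2 k (2*k+3)} \<in> E2 k" unfolding E2_def by (auto simp: V2_def)
      moreover have "par2 k (2*k+3) = 0" unfolding par2_def by simp
      moreover have "sig2 k t = 0" "sig2 k (Suc t) = 2*k+3" using 2 unfolding sig2_def by auto
      ultimately show ?thesis by (simp add: insert_commute)
    next
      case 3
      define v where "v = 2*k+4 - t"
      have v: "k+2 \<le> v" "v \<le> 2*k+2" unfolding v_def using 3 t by auto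
      have "{v, par2 k v} \<in> E2 k" unfolding E2_def using v by (auto simp: V2_def)
      moreover have "par2 k v = v + 1" unfolding par2_def using v by auto
      moreover have "sig2 k t = v + 1" "sig2 k (Suc t) = v" unfolding sig2_def v_def using 3 t by auto
      ultimately show ?thesis by (simp add: insert_commute)
    qed
  qed
  have vert: "\<And>w. w \<in> V2 k \<Longrightarrow> pos2 k w \<le> k+3 \<and> ((e2 k w = 0 \<and> sig2 k (pos2 k w) = w) \<or> (e2 k w = 1 \<and> {w, sig2 k (pos2 k w)} \<in> E2 k))"
  proof -
    fix w assume w: "w \<in> V2 k"
    show "pos2 k w \<le> k+3 \<and> ((e2 k w = 0 \<and> sig2 k (pos2 k w) = w) \<or> (e2 k w = 1 \<and> {w, sig2 k (pos2 k w)} \<in> E2 k))"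
    proof (cases "w \<le> 2*k+3")
      case True then show ?thesis using w unfolding pos2_def e2_def sig2_def V2_def by auto
    next
      case False
      then have w2: "2*k+4 \<le> w" "w < 4*k+8" using w unfolding V2_def by auto
      have "{w, par2 k w} \<in> E2 k" unfolding E2_def using w w2 by auto
      then show ?thesis using False w2 hub2[OF w2] unfolding e2_def by auto
    qed
  qed
  have "walk (E2 k) (e2 k u + e2 k v + (if pos2 k u \<le> pos2 k v then pos2 k v - pos2 k u else pos2 k u - pos2 k v)) u v"
    by (rule broom_walk[OF arc vert u v])
  moreover have "nat (G2 k u v) = e2 k u + e2 k v + (if pos2 k u \<le> pos2 k v then pos2 k v - pos2 k u else pos2 k u - pos2 k v)"
    unfolding G2_def using False by auto
  ultimately show ?thesis by simp
qed

lemma kiso2: "k_isometric k (V2 k) (E2 k) (EU0 k)"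
proof (rule kiso_by_lip)
  show "E2 k \<subseteq> EU0 k" unfolding EU0_def by simp
next
  fix u assume u: "u \<in> V2 k"
  show "\<exists>\<phi>::nat\<Rightarrow>int. \<phi> u = 0 \<and> (\<forall>a b. {a,b} \<in> EU0 k \<longrightarrow> \<phi> a \<le> \<phi> b + 1)
      \<and> (\<forall>v\<in>V2 k. \<phi> v \<ge> int k + 1 \<or> (\<exists>m. walk (E2 k) m u v \<and> int m \<le> \<phi> v))"
  proof (intro exI[of _ "phi2 k u"] conjI allI impI ballI)
    have "u \<le> 1 \<or> k+2 \<le> u" using u unfolding V2_def by auto
    then show "phi2 k u u = 0" unfolding phi2_def G2_def by auto
  next
    fix a b assume "{a,b} \<in> EU0 k"
    then obtain v w where vw: "(v \<in> V1 k \<and> v \<noteq> 0 \<and> w = par1 k v) \<or> (v \<in> V2 k \<and> v \<noteq> 0 \<and> w = par2 k v)"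
      and ab: "(a = v \<and> b = w) \<or> (a = w \<and> b = v)" using EU0_edge by blast
    have "\<bar>phi2 k u v - phi2 k u w\<bar> \<le> 1" by (rule phi2_lip_edge[OF u vw])
    then show "phi2 k u a \<le> phi2 k u b + 1" using ab by auto
  next
    fix v assume v: "v \<in> V2 k"
    have pv: "phi2 k u v = min (int k + 1) (G2 k u v)"
      using v unfolding phi2_def V2_def by auto
    show "int k + 1 \<le> phi2 k u v \<or> (\<exists>m. walk (E2 k) m u v \<and> int m \<le> phi2 k u v)"
    proof (cases "G2 k u v \<ge> int k + 1")
      case True then show ?thesis using pv by simp
    next
      case False
      then have "phi2 k u v = G2 k u v" using pv by simp
      then show ?thesis using walk2[OF u v] G2_nonneg[of k u v] by (intro disjI2 exI[of _ "nat (G2 k u v)"]) simp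
    qed
  qed
qed

lemma univ0: "k_iso_universal k {(V1 k, E1 k), (V2 k, E2 k)} (VU0 k) (EU0 k)"
proof -
  have g1: "graph (V1 k) (E1 k)" and g2: "graph (V2 k) (E2 k)" using tree1 tree2 unfolding is_tree_def by auto
  have i1: "isomorphic (V1 k) (E1 k) (V1 k) (E1 k)" unfolding isomorphic_def by (intro exI[of _ id]) simp
  have i2: "isomorphic (V2 k) (E2 k) (V2 k) (E2 k)" unfolding isomorphic_def by (intro exI[of _ id]) simp
  have s1: "E1 k \<subseteq> EU0 k" "E2 k \<subseteq> EU0 k" unfolding EU0_def by auto
  have "k_iso_embeds k (V1 k) (E1 k) (VU0 k) (EU0 k)"
    unfolding k_iso_embeds_def subgraph_def using g1 V1_sub kiso1 i1 s1 by blast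
  moreover have "k_iso_embeds k (V2 k) (E2 k) (VU0 k) (EU0 k)"
    unfolding k_iso_embeds_def subgraph_def using g2 V2_sub kiso2 i2 s1 by blast
  ultimately show ?thesis unfolding k_iso_universal_def using graphU0 by simp
qed

lemma graph_edge: "graph V E \<Longrightarrow> {u,w} \<in> E \<Longrightarrow> u \<in> V \<and> w \<in> V \<and> u \<noteq> w"
proof -
  assume g: "graph V E" and e: "{u,w} \<in> E"
  then obtain a b where ab: "a \<noteq> b" "a \<in> V" "b \<in> V" "{u,w} = {a,b}" unfolding graph_def by meson
  then have "(u = a \<and> w = b) \<or> (u = b \<and> w = a)" by (simp add: doubleton_eq_iff)
  then show ?thesis using ab by auto
qed

lemma walk_map:
  assumes g: "graph V E" and h: "\<forall>u\<in>V. \<forall>v\<in>V. {u,v} \<in> E \<longrightarrow> {f u, f v} \<in> E'"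
  shows "u \<in> V \<Longrightarrow> walk E n u v \<Longrightarrow> walk E' n (f u) (f v)"
proof (induction n arbitrary: u)
  case 0 then show ?case by simp
next
  case (Suc n)
  then obtain w where w: "{u,w} \<in> E" "walk E n w v" by auto
  have "w \<in> V" using graph_edge[OF g w(1)] by simp
  then have "walk E' n (f w) (f v)" using Suc.IH w(2) by simp
  moreover have "{f u, f w} \<in> E'" using h Suc.prems \<open>w \<in> V\<close> w(1) by blast
  ultimately show ?case by auto
qed

lemma iso_connected:
  assumes "isomorphic V E V' E'" "connected_graph V E" "graph V E"
  shows "connected_graph V' E'"
proof -
  obtain f where f: "bij_betw f V V'" "\<forall>u\<in>V. \<forall>v\<in>V. {u,v} \<in> E \<longleftrightarrow> {f u, f v} \<in> E'"
    using assms(1) unfolding isomorphic_def by blast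
  show ?thesis unfolding connected_graph_def
  proof (intro ballI)
    fix a b assume "a \<in> V'" "b \<in> V'"
    then obtain u v where uv: "u \<in> V" "v \<in> V" "a = f u" "b = f v" using f(1) unfolding bij_betw_def by blast
    then obtain n where "walk E n u v" using assms(2) unfolding connected_graph_def by blast
    then have "walk E' n (f u) (f v)" using walk_map[OF assms(3), of f E'] f(2) uv by blast
    then show "\<exists>n. walk E' n a b" using uv by blast
  qed
qed

lemma center:
  assumes nc: "\<not> has_cycle VU EU" and gH: "graph VH EH" and sE: "EH \<subseteq> EU" and sV: "VH \<subseteq> VU"
  and con: "connected_graph VH EH" and X: "X \<in> VU" and a: "a \<in> VH" and b: "b \<in> VH"
  and ne: "a \<noteq> b" "X \<noteq> a" "X \<noteq> b" and e: "{a,X} \<in> EU" "{X,b} \<in> EU"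
  shows "X \<in> VH \<and> {a,X} \<in> EH"
proof -
  obtain n where w: "walk EH n a b" using con a b unfolding connected_graph_def by blast
  obtain xs where xs: "pth EH xs" "distinct xs" "xs \<noteq> []" "hd xs = a" "last xs = b" "set xs \<subseteq> insert a (\<Union>EH)"
    using walk_pth[OF w] by auto
  have "\<Union>EH \<subseteq> VH"
  proof
    fix x assume "x \<in> \<Union>EH"
    then obtain e where e: "e \<in> EH" "x \<in> e" by blast
    then obtain p q where "p \<in> VH" "q \<in> VH" "e = {p,q}" using gH unfolding graph_def by meson
    then show "x \<in> VH" using e by auto
  qed
  then have sx: "set xs \<subseteq> VH" using xs(6) a by blast
  have "xs = [a, X, b]"
  proof (rule pth_unique[OF nc])
    show "pth EU xs" using pth_mono[OF xs(1) sE] .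
    show "pth EU [a, X, b]" using e by simp
    show "set xs \<subseteq> VU" using sx sV by blast
    show "set [a, X, b] \<subseteq> VU" using X a b sV by auto
    show "distinct xs" by (rule xs(2))
    show "distinct [a, X, b]" using ne by simp
    show "xs \<noteq> []" by (rule xs(3))
    show "[a, X, b] \<noteq> []" by simp
    show "hd xs = hd [a, X, b]" using xs(4) by simp
    show "last xs = last [a, X, b]" using xs(5) by simp
  qed
  then show ?thesis using xs(1) sx by auto
qed

lemma deg1: "z \<in> V1 k \<Longrightarrow> z \<noteq> 0 \<Longrightarrow> z \<noteq> k+3 \<Longrightarrow> {z,a} \<in> E1 k \<Longrightarrow> a = par1 k z \<or> a = z+1"
proof -
  assume z: "z \<in> V1 k" "z \<noteq> 0" "z \<noteq> k+3" and "{z,a} \<in> E1 k"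
  then obtain v where v: "v \<in> V1 k" "v \<noteq> 0" "{z,a} = {v, par1 k v}" unfolding E1_def by auto
  then consider "z = v" "a = par1 k v" | "a = v" "z = par1 k v" by (auto simp: doubleton_eq_iff)
  then show ?thesis
  proof cases
    case 1 then show ?thesis by simp
  next
    case 2
    show ?thesis
    proof (cases "v \<le> k+3")
      case True then show ?thesis using 2 v unfolding par1_def by auto
    next
      case False then show ?thesis using 2 z unfolding par1_def by (auto split: if_splits)
    qed
  qed
qed

lemma arcE1: "t < k+3 \<Longrightarrow> {t, Suc t} \<in> E1 k"
proof -
  assume t: "t < k+3"
  have "{Suc t, par1 k (Suc t)} \<in> E1 k" unfolding E1_def using t by (auto simp: V1_def)
  then show ?thesis unfolding par1_def using t by (simp add: insert_commute)
qed

lemma arcE2: "k+3 \<le> t \<Longrightarrow> t < 2*k+3 \<Longrightarrow> {t, Suc t} \<in> E2 k"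
proof -
  assume t: "k+3 \<le> t" "t < 2*k+3"
  have "{t, par2 k t} \<in> E2 k" unfolding E2_def using t by (auto simp: V2_def)
  moreover have "par2 k t = Suc t" unfolding par2_def using t by auto
  ultimately show ?thesis by simp
qed

lemma wrapE2: "{2*k+3, 0} \<in> E2 k"
proof -
  have "{2*k+3, par2 k (2*k+3)} \<in> E2 k" unfolding E2_def by (auto simp: V2_def)
  moreover have "par2 k (2*k+3) = 0" unfolding par2_def by simp
  ultimately show ?thesis by simp
qed

lemma pthA: "pth (E1 k) [0..<k+4]"
  by (rule pth_upt) (use arcE1 in auto)

lemma pth_upt_snoc:
  assumes "\<And>i. a \<le> i \<Longrightarrow> Suc i < b \<Longrightarrow> {i, Suc i} \<in> E" "a < b" "{b - 1, c} \<in> E"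
  shows "pth E ([a..<b] @ [c])"
proof -
  have "pth E [a..<b]" by (rule pth_upt) (use assms(1) in auto)
  moreover have "last [a..<b] = b - 1" using assms(2) by simp
  ultimately show ?thesis using assms(2,3) by (simp add: pth_append)
qed

lemma pthB: "pth (E2 k) ([k+3..<2*k+4] @ [0])"
proof (rule pth_upt_snoc)
  show "{2*k+4 - 1, 0} \<in> E2 k"
  proof -
    have "2*k+4 - 1 = 2*k+3" by simp
    then show ?thesis using wrapE2[of k] by metis
  qed
qed (use arcE2 in auto)

lemma no_tree:
  assumes U: "k_iso_universal k {(V1 k, E1 k), (V2 k, E2 k)} VU EU" and T: "is_tree VU EU"
    and C: "card VU \<le> 4*k+8"
  shows False
proof -
  have gU: "graph VU EU" and nc: "\<not> has_cycle VU EU" using T unfolding is_tree_def by auto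
  have finU: "finite VU" using gU unfolding graph_def by auto
  have "k_iso_embeds k (V1 k) (E1 k) VU EU" using U unfolding k_iso_universal_def by auto
  then obtain VH1 EH1 where s1: "subgraph VH1 EH1 VU EU" and i1: "isomorphic (V1 k) (E1 k) VH1 EH1"
    unfolding k_iso_embeds_def by blast
  have "k_iso_embeds k (V2 k) (E2 k) VU EU" using U unfolding k_iso_universal_def by auto
  then obtain VH2 EH2 where s2: "subgraph VH2 EH2 VU EU" and i2: "isomorphic (V2 k) (E2 k) VH2 EH2"
    unfolding k_iso_embeds_def by blast
  obtain f1 where f1: "bij_betw f1 (V1 k) VH1" and f1e: "\<forall>u\<in>V1 k. \<forall>v\<in>V1 k. {u,v} \<in> E1 k \<longleftrightarrow> {f1 u, f1 v} \<in> EH1"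
    using i1 unfolding isomorphic_def by blast
  obtain f2 where f2: "bij_betw f2 (V2 k) VH2" and f2e: "\<forall>u\<in>V2 k. \<forall>v\<in>V2 k. {u,v} \<in> E2 k \<longleftrightarrow> {f2 u, f2 v} \<in> EH2"
    using i2 unfolding isomorphic_def by blast
  have gH1: "graph VH1 EH1" and sV1: "VH1 \<subseteq> VU" and sE1: "EH1 \<subseteq> EU" using s1 unfolding subgraph_def by auto
  have gH2: "graph VH2 EH2" and sV2: "VH2 \<subseteq> VU" and sE2: "EH2 \<subseteq> EU" using s2 unfolding subgraph_def by auto
  have con1: "connected_graph VH1 EH1"
    using iso_connected[OF i1] tree1[of k] unfolding is_tree_def by blast
  have im1: "f1 ` V1 k = VH1" and im2: "f2 ` V2 k = VH2" using f1 f2 unfolding bij_betw_def by auto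
  have inj1: "inj_on f1 (V1 k)" and inj2: "inj_on f2 (V2 k)" using f1 f2 unfolding bij_betw_def by auto
  define hubs where "hubs = {f1 0, f1 (k+3)}"
  have finH1: "finite VH1" using finU sV1 finite_subset by blast
  have few: "card (f2 ` S \<inter> VH1) \<le> 2"
    if S: "S \<subseteq> V2 k" and c: "c \<in> V2 k" "c \<notin> S" and adj: "\<forall>l\<in>S. {l,c} \<in> E2 k" and nh: "f2 c \<notin> hubs" for S c
  proof (rule ccontr)
    assume "\<not> ?thesis"
    then have "3 \<le> card (f2 ` S \<inter> VH1)" by simp
    moreover have "finite (f2 ` S \<inter> VH1)" using finH1 by simp
    ultimately obtain T where T: "T \<subseteq> f2 ` S \<inter> VH1" "card T = 3" using obtain_subset_with_card_n by metis
    then obtain a b d where abd: "T = {a,b,d}" "a \<noteq> b" "b \<noteq> d" "a \<noteq> d" unfolding card_3_iff by blast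
    define X where "X = f2 c"
    have XU: "X \<in> VU" unfolding X_def using c im2 sV2 by blast
    have adjx: "{x, X} \<in> EU \<and> x \<noteq> X \<and> x \<in> VH1" if x: "x \<in> T" for x
    proof -
      obtain l where l: "l \<in> S" "x = f2 l" using x T by blast
      have "{l, c} \<in> E2 k" using adj l by blast
      then have "{f2 l, f2 c} \<in> EH2" using f2e S l c by blast
      moreover have "f2 l \<noteq> f2 c" using inj2 S l c unfolding inj_on_def by blast
      ultimately show ?thesis using sE2 l x T unfolding X_def by auto
    qed
    have ea: "{a,X} \<in> EU" "a \<noteq> X" "a \<in> VH1" using adjx[of a] abd by auto
    have eb: "{b,X} \<in> EU" "b \<noteq> X" "b \<in> VH1" using adjx[of b] abd by auto
    have ed: "{d,X} \<in> EU" "d \<noteq> X" "d \<in> VH1" using adjx[of d] abd by auto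
    have ca: "X \<in> VH1 \<and> {a,X} \<in> EH1"
      by (rule center[OF nc gH1 sE1 sV1 con1 XU ea(3) eb(3)]) (use ea eb abd in \<open>auto simp: insert_commute\<close>)
    have cb: "X \<in> VH1 \<and> {b,X} \<in> EH1"
      by (rule center[OF nc gH1 sE1 sV1 con1 XU eb(3) ed(3)]) (use eb ed abd in \<open>auto simp: insert_commute\<close>)
    have cd: "X \<in> VH1 \<and> {d,X} \<in> EH1"
      by (rule center[OF nc gH1 sE1 sV1 con1 XU ed(3) ea(3)]) (use ed ea abd in \<open>auto simp: insert_commute\<close>)
    obtain z where z: "z \<in> V1 k" "X = f1 z" using ca im1 by blast
    obtain wa where wa: "wa \<in> V1 k" "a = f1 wa" using ea(3) im1 by blast
    obtain wb where wb: "wb \<in> V1 k" "b = f1 wb" using eb(3) im1 by blast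
    obtain wd where wd: "wd \<in> V1 k" "d = f1 wd" using ed(3) im1 by blast
    have zh1: "f1 z \<noteq> f1 0" "f1 z \<noteq> f1 (k+3)" using nh z unfolding hubs_def X_def by auto
    have zh: "z \<noteq> 0" "z \<noteq> k+3" using zh1 by metis+
    have "{z, wa} \<in> E1 k" using f1e z wa ca by (metis insert_commute)
    then have na: "wa = par1 k z \<or> wa = z+1" using deg1[OF z(1) zh] by blast
    have "{z, wb} \<in> E1 k" using f1e z wb cb by (metis insert_commute)
    then have nb: "wb = par1 k z \<or> wb = z+1" using deg1[OF z(1) zh] by blast
    have "{z, wd} \<in> E1 k" using f1e z wd cd by (metis insert_commute)
    then have nd: "wd = par1 k z \<or> wd = z+1" using deg1[OF z(1) zh] by blast
    have "wa \<noteq> wb" "wb \<noteq> wd" "wa \<noteq> wd" using abd wa wb wd by auto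
    then show False using na nb nd by auto
  qed
  have cH1: "card VH1 = 3*k+8" using bij_betw_same_card[OF f1] card1 by simp
  have cH2: "card VH2 = 3*k+8" using bij_betw_same_card[OF f2] card2 by simp
  have finH2: "finite VH2" using finU sV2 finite_subset by blast
  have "card (VH1 \<union> VH2) \<le> card VU" using finU sV1 sV2 by (intro card_mono) auto
  moreover have "card VH1 + card VH2 = card (VH1 \<union> VH2) + card (VH1 \<inter> VH2)"
    using finH1 finH2 by (rule card_Un_Int)
  ultimately have cI: "2*k+8 \<le> card (VH1 \<inter> VH2)" using C cH1 cH2 by simp
  define L2x where "L2x = insert 1 {2*k+4..<3*k+6}"
  define L2y where "L2y = insert (k+2) {3*k+6..<4*k+8}"
  define R2 where "R2 = insert 0 {k+3..<2*k+4}"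
  have V2eq: "V2 k = L2x \<union> L2y \<union> R2" unfolding V2_def L2x_def L2y_def R2_def by auto
  have cLx: "card L2x = k+3" unfolding L2x_def by simp
  have cLy: "card L2y = k+3" unfolding L2y_def by simp
  have cR: "card R2 = k+2" unfolding R2_def by simp
  have Isub: "VH1 \<inter> VH2 \<subseteq> (f2 ` L2x \<inter> VH1) \<union> (f2 ` L2y \<inter> VH1) \<union> f2 ` R2"
    using im2 V2eq by auto
  have cIle: "card (VH1 \<inter> VH2) \<le> card (f2 ` L2x \<inter> VH1) + card (f2 ` L2y \<inter> VH1) + card (f2 ` R2)"
  proof -
    have "card (VH1 \<inter> VH2) \<le> card ((f2 ` L2x \<inter> VH1) \<union> (f2 ` L2y \<inter> VH1) \<union> f2 ` R2)"
      using Isub by (intro card_mono) (auto simp: L2x_def L2y_def R2_def)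
    also have "\<dots> \<le> card ((f2 ` L2x \<inter> VH1) \<union> (f2 ` L2y \<inter> VH1)) + card (f2 ` R2)" by (rule card_Un_le)
    also have "\<dots> \<le> card (f2 ` L2x \<inter> VH1) + card (f2 ` L2y \<inter> VH1) + card (f2 ` R2)"
      using card_Un_le by simp
    finally show ?thesis .
  qed
  have cx: "card (f2 ` L2x \<inter> VH1) \<le> k+3"
    using card_mono[of "f2 ` L2x" "f2 ` L2x \<inter> VH1"] card_image_le[of L2x f2] cLx by (simp add: L2x_def)
  have cy: "card (f2 ` L2y \<inter> VH1) \<le> k+3"
    using card_mono[of "f2 ` L2y" "f2 ` L2y \<inter> VH1"] card_image_le[of L2y f2] cLy by (simp add: L2y_def)
  have cr: "card (f2 ` R2) \<le> k+2" using card_image_le[of R2 f2] cR by (simp add: R2_def)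
  have ax: "\<forall>l\<in>L2x. {l,0} \<in> E2 k"
  proof
    fix l assume l: "l \<in> L2x"
    have "l \<in> V2 k" "l \<noteq> 0" using l unfolding L2x_def V2_def by auto
    then have "{l, par2 k l} \<in> E2 k" unfolding E2_def by auto
    moreover have "par2 k l = 0" using l unfolding L2x_def par2_def by auto
    ultimately show "{l,0} \<in> E2 k" by simp
  qed
  have ay: "\<forall>l\<in>L2y. {l,k+3} \<in> E2 k"
  proof
    fix l assume l: "l \<in> L2y"
    have "l \<in> V2 k" "l \<noteq> 0" using l unfolding L2y_def V2_def by auto
    then have "{l, par2 k l} \<in> E2 k" unfolding E2_def by auto
    moreover have "par2 k l = k+3" using l unfolding L2y_def par2_def by auto
    ultimately show "{l,k+3} \<in> E2 k" by simp
  qed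
  have hX: "f2 0 \<in> hubs"
  proof (rule ccontr)
    assume "f2 0 \<notin> hubs"
    then have "card (f2 ` L2x \<inter> VH1) \<le> 2"
      using few[of L2x 0] ax V2eq by (auto simp: L2x_def V2_def)
    then show False using cI cIle cy cr by linarith
  qed
  have hY: "f2 (k+3) \<in> hubs"
  proof (rule ccontr)
    assume "f2 (k+3) \<notin> hubs"
    then have "card (f2 ` L2y \<inter> VH1) \<le> 2"
      using few[of L2y "k+3"] ay V2eq by (auto simp: L2y_def V2_def)
    then show False using cI cIle cx cr by linarith
  qed
  have XY: "f2 0 \<noteq> f2 (k+3)" using inj2 unfolding inj_on_def V2_def by auto
  define pA where "pA = map f1 [0..<k+4]"
  define pB where "pB = map f2 ([k+3..<2*k+4] @ [0])"
  have sA: "set [0..<k+4] \<subseteq> V1 k" unfolding V1_def by auto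
  have sB: "set ([k+3..<2*k+4] @ [0]) \<subseteq> V2 k" unfolding V2_def by auto
  have ppA: "pth EU pA" unfolding pA_def
    by (rule pth_mono[OF pth_map[OF _ sA pthA] sE1]) (use f1e in blast)
  have ppB: "pth EU pB" unfolding pB_def
    by (rule pth_mono[OF pth_map[OF _ sB pthB] sE2]) (use f2e in blast)
  have dA: "distinct pA" unfolding pA_def using inj1 sA by (simp add: distinct_map inj_on_subset)
  have dB: "distinct pB" unfolding pB_def distinct_map
  proof
    show "distinct ([k+3..<2*k+4] @ [0])" by simp
    show "inj_on f2 (set ([k+3..<2*k+4] @ [0]))" by (rule inj_on_subset[OF inj2 sB])
  qed
  have sUA: "set pA \<subseteq> VU" unfolding pA_def using sA im1 sV1 by auto
  have sUB: "set pB \<subseteq> VU" unfolding pB_def using sB im2 sV2 by auto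
  have hlA: "hd pA = f1 0" "last pA = f1 (k+3)" "pA \<noteq> []" unfolding pA_def by (simp_all add: hd_map last_map add.commute)
  have hlB: "hd pB = f2 (k+3)" "last pB = f2 0" "pB \<noteq> []" unfolding pB_def by (simp_all add: hd_map)
  have lAB: "length pA \<noteq> length pB" unfolding pA_def pB_def by simp
  from hX hY XY have "(f2 0 = f1 0 \<and> f2 (k+3) = f1 (k+3)) \<or> (f2 0 = f1 (k+3) \<and> f2 (k+3) = f1 0)"
    unfolding hubs_def by auto
  then show False
  proof
    assume h: "f2 0 = f1 0 \<and> f2 (k+3) = f1 (k+3)"
    have "pB = rev pA"
      by (rule pth_unique[OF nc ppB]) (use ppA dA dB sUA sUB hlA hlB h in \<open>auto simp: pth_rev hd_rev last_rev\<close>)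
    then show False using lAB by simp
  next
    assume h: "f2 0 = f1 (k+3) \<and> f2 (k+3) = f1 0"
    have "pB = pA"
      by (rule pth_unique[OF nc ppB ppA]) (use dA dB sUA sUB hlA hlB h in auto)
    then show False using lAB by simp
  qed
qed

theorem theorem7:
  fixes n :: nat
  assumes "n \<ge> 8"
  shows "\<exists>(V1 :: nat set) E1 (V2 :: nat set) E2.
           is_tree V1 E1 \<and> card V1 \<le> n \<and> is_tree V2 E2 \<and> card V2 \<le> n \<and>
           (\<forall>(VU :: nat set) EU.
              min_k_iso_universal ((n - 8) div 3) {(V1, E1), (V2, E2)} VU EU
              \<longrightarrow> \<not> is_tree VU EU)"
proof -
  define k where "k = (n - 8) div 3"
  have "3 * ((n - 8) div 3) \<le> n - 8" by simp
  then have kn: "3*k+8 \<le> n" using assms unfolding k_def by linarith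
  have t1: "is_tree (V1 k) (E1 k)" by (rule tree1)
  have t2: "is_tree (V2 k) (E2 k)" by (rule tree2)
  have c1: "card (V1 k) \<le> n" using card1[of k] kn by simp
  have c2: "card (V2 k) \<le> n" using card2[of k] kn by simp
  have main: "\<forall>(VU :: nat set) EU. min_k_iso_universal ((n - 8) div 3) {(V1 k, E1 k), (V2 k, E2 k)} VU EU
              \<longrightarrow> \<not> is_tree VU EU"
  proof (intro allI impI)
    fix VU :: "nat set" and EU
    assume m: "min_k_iso_universal ((n - 8) div 3) {(V1 k, E1 k), (V2 k, E2 k)} VU EU"
    then have u: "k_iso_universal k {(V1 k, E1 k), (V2 k, E2 k)} VU EU"
      and c: "card VU \<le> card (VU0 k)"
      using univ0[of k] unfolding min_k_iso_universal_def k_def by blast+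
    show "\<not> is_tree VU EU"
    proof
      assume "is_tree VU EU"
      then show False using no_tree[OF u] c cardU0[of k] by simp
    qed
  qed
  show ?thesis using t1 t2 c1 c2 main by blast
qed

end
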